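(* Let $n\ge1$, $m>0$, $\alpha\in\mathbf R$, $\beta,\gamma>0$, $1\le p,q<\infty$. If $P_{\beta m}$ is bounded from $L^p_{\alpha m}$ into $L^q_{\gamma m}$, then $c\ge1$, where $c=\frac{4\gamma}{\beta^2q}\left(\beta-\frac{\alpha}{p}\right)$ (equivalently $q\le q_{\max}:=\frac{4\gamma}{\beta^2}(\beta-\frac{\alpha}{p})$). Moreover, in that case $\beta-\frac{\alpha}{p}>0$.
   Context: For $\alpha\in\mathbf R$, $m>0$ let $d\mu_{\alpha m}(z)=e^{-\alpha|z|^{2m}}dz$ on $\mathbf C^n$ and $L^p_{\alpha m}=L^p(\mathbf C^n,d\mu_{\alpha m})$. $K_{\beta m}(x,y)=\frac{m\beta^{n/m}}{\pi^n}\sum_{k\ge0}\frac{(\beta^{1/m}\langle x,y\rangle)^k}{k!}\frac{\Gamma(n+k)}{\Gamma(\frac{n+k}{m})}$ and $P_{\beta m}f(x)=\int f(y)K_{\beta m}(x,y)\,d\mu_{\beta m}(y)$ (the orthogonal projection of $L^2_{\beta m}$ onto its entire functions). "$P_{\beta m}$ is bounded from $L^p_{\alpha m}$ into $L^q_{\gamma m}$" means that $P_{\beta m}$, defined by this integral on $L^2_{\beta m}\cap L^p_{\alpha m}$, extends by continuity to a bounded operator $L^p_{\alpha m}\to L^q_{\gamma m}$. *)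

theory Defs
  imports "HOL-Analysis.Analysis"
begin

text \<open>Points of C^n are modelled as vectors of type complex^'n, n = CARD('n).
  The measure dz is Lebesgue measure lborel.\<close>

definition mu :: "real \<Rightarrow> real \<Rightarrow> (complex ^ ('n::finite)) measure" where
  "mu a m = density lborel (\<lambda>z. ennreal (exp (- a * norm z powr (2 * m))))"

definition cinner :: "complex ^ ('n::finite) \<Rightarrow> complex ^ ('n::finite) \<Rightarrow> complex" where
  "cinner x y = (\<Sum>j\<in>UNIV. x $ j * cnj (y $ j))"

definition inLp :: "real \<Rightarrow> real \<Rightarrow> real \<Rightarrow> (complex ^ ('n::finite) \<Rightarrow> complex) \<Rightarrow> bool" where
  "inLp p a m f \<longleftrightarrow> f \<in> borel_measurable lborel \<and>
      integrable (mu a m) (\<lambda>z. norm (f z) powr p)"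

definition Lpnorm :: "real \<Rightarrow> real \<Rightarrow> real \<Rightarrow> (complex ^ ('n::finite) \<Rightarrow> complex) \<Rightarrow> real" where
  "Lpnorm p a m f = (integral\<^sup>L (mu a m) (\<lambda>z. norm (f z) powr p)) powr (1 / p)"

definition kernel :: "real \<Rightarrow> real \<Rightarrow> complex ^ ('n::finite) \<Rightarrow> complex ^ ('n::finite) \<Rightarrow> complex" where
  "kernel b m x y =
     complex_of_real (m * b powr (real CARD('n) / m) / pi ^ CARD('n)) *
     (\<Sum>k. (complex_of_real (b powr (1 / m)) * cinner x y) ^ k / of_nat (fact k) *
           complex_of_real (Gamma (real CARD('n) + real k) /
                            Gamma ((real CARD('n) + real k) / m)))"

definition Proj :: "real \<Rightarrow> real \<Rightarrow> (complex ^ ('n::finite) \<Rightarrow> complex) \<Rightarrow> complex ^ ('n::finite) \<Rightarrow> complex" where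
  "Proj b m f x = integral\<^sup>L (mu b m) (\<lambda>y. f y * kernel b m x y)"

text \<open>P_{b m} is bounded from L^p_{a m} into L^q_{g m}: there is a constant C such that
  for every f in L^2_{b m} \<inter> L^p_{a m}, P f is measurable and
  ||P f||_{q,g} \<le> C ||f||_{p,a}  (so P extends by continuity from the dense subspace).\<close>
definition P_bounded :: "real \<Rightarrow> real \<Rightarrow> real \<Rightarrow> real \<Rightarrow> real \<Rightarrow> real \<Rightarrow> ('n::finite) itself \<Rightarrow> bool" where
  "P_bounded b m p a q g (_ :: ('n::finite) itself) \<longleftrightarrow>
     (\<exists>C. \<forall>f :: complex ^ ('n::finite) \<Rightarrow> complex.
        inLp 2 b m f \<and> inLp p a m f \<longrightarrow>
          Proj b m f \<in> borel_measurable lborel \<and>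
          (\<integral>\<^sup>+ z. ennreal (norm (Proj b m f z) powr q) \<partial>mu g m)
             \<le> ennreal ((C * Lpnorm p a m f) powr q))"

end

theory Submission
  imports Defs "HOL-Real_Asymp.Real_Asymp"
begin

lemma fact_upper:
  assumes "j \<ge> 1"
  shows "fact j \<le> exp 1 * real j ^ (j+1) * exp (- real j)"
  using assms
proof (induction j rule: dec_induct)
  case base
  then show ?case by (simp add: exp_minus)
next
  case (step j)
  have j: "real j \<ge> 1" using step by simp
  have l: "1 / (real j + 1) \<le> ln ((real j + 1) / real j)"
  proof -
    have "ln (real j / (real j + 1)) \<le> real j / (real j + 1) - 1"
      using j by (intro ln_le_minus_one) auto
    also have "\<dots> = - (1 / (real j + 1))" using j by (simp add: field_simps)
    finally show ?thesis using j by (simp add: ln_div)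
  qed
  have "exp 1 \<le> exp ((real j + 1) * ln ((real j + 1) / real j))"
    using l j by (simp add: field_simps)
  also have "\<dots> = ((real j + 1) / real j) powr (real j + 1)"
    using j by (simp add: powr_def)
  also have "\<dots> = ((real j + 1) / real j) ^ (j+1)"
    using j by (subst powr_realpow[symmetric]) (auto simp: add.commute)
  finally have e: "exp 1 * real j ^ (j+1) \<le> (real j + 1) ^ (j+1)"
    using j by (simp add: field_simps power_divide)
  have "fact (Suc j) = (real j + 1) * fact j" by simp
  also have "\<dots> \<le> (real j + 1) * (exp 1 * real j ^ (j+1) * exp (- real j))"
    using step by (intro mult_left_mono) auto
  also have "\<dots> = exp 1 * (exp 1 * real j ^ (j+1)) * (real j + 1) * exp (- real (Suc j))"
    by (simp add: exp_diff exp_minus field_simps)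
  also have "\<dots> \<le> exp 1 * (real j + 1) ^ (j+1) * (real j + 1) * exp (- real (Suc j))"
    using e by (intro mult_right_mono mult_left_mono) auto
  also have "\<dots> = exp 1 * real (Suc j) ^ (Suc j + 1) * exp (- real (Suc j))"
    by (simp add: field_simps)
  finally show ?case .
qed

lemma fact_lower: "(real j / exp 1) ^ j \<le> fact j"
proof -
  have "real j ^ j / fact j \<le> exp (real j)"
  proof -
    have "(\<lambda>k. real j ^ k /\<^sub>R fact k) sums exp (real j)"
      by (rule exp_converges)
    hence s: "summable (\<lambda>k. real j ^ k / fact k)" and e: "exp (real j) = (\<Sum>k. real j ^ k / fact k)"
      by (auto simp: sums_iff divide_inverse mult.commute)
    have "sum (\<lambda>k. real j ^ k / fact k) {j} \<le> (\<Sum>k. real j ^ k / fact k)"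
      by (rule sum_le_suminf[OF s]) auto
    thus ?thesis using e by simp
  qed
  hence "real j ^ j \<le> exp (real j) * fact j" by (simp add: divide_le_eq)
  thus ?thesis by (simp add: power_divide exp_of_nat_mult[symmetric] divide_le_eq mult.commute)
qed


lemma Gamma_nat_real: "j \<ge> 1 \<Longrightarrow> Gamma (real j) = fact (j - 1)"
  using Gamma_fact[of "j - 1", where 'a=real] by (simp add: of_nat_diff)

lemma Gamma_mono_real: "(3/2::real) \<le> x \<Longrightarrow> x \<le> y \<Longrightarrow> Gamma x \<le> Gamma y"
proof (cases "x = y")
  case False
  assume "3/2 \<le> x" "x \<le> y"
  with False show ?thesis using Gamma_real_strict_mono[of x y] by auto
qed simp

lemma Gamma_upper:
  fixes v :: real assumes v: "v \<ge> 2"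
  shows "Gamma v \<le> exp 1 * (v+1) powr (v+2) * exp (- v)"
proof -
  define j where "j = nat \<lceil>v\<rceil>"
  have jv: "v \<le> real j" "real j < v + 1" using v unfolding j_def by linarith+
  have j1: "j \<ge> 1" using jv v by linarith
  have "Gamma v \<le> Gamma (real j)" using jv v by (intro Gamma_mono_real) auto
  also have "\<dots> = fact (j - 1)" using j1 by (rule Gamma_nat_real)
  also have "\<dots> \<le> (fact j :: real)" by (intro fact_mono) auto
  also have "\<dots> \<le> exp 1 * real j ^ (j+1) * exp (- real j)" using j1 by (rule fact_upper)
  also have "\<dots> \<le> exp 1 * (v+1) powr (v+2) * exp (- v)"
  proof -
    have "real j ^ (j+1) = real j powr (real j + 1)"
      using j1 powr_realpow[of "real j" "j+1"] by (auto simp: add.commute)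
    also have "\<dots> \<le> (v+1) powr (real j + 1)"
      using jv j1 by (intro powr_mono2) auto
    also have "\<dots> \<le> (v+1) powr (v+2)"
      using jv v by (intro powr_mono) auto
    finally have a: "real j ^ (j+1) \<le> (v+1) powr (v+2)" .
    have b: "exp (- real j) \<le> exp (-v)" using jv by simp
    show ?thesis using a b by (intro mult_mono) auto
  qed
  finally show ?thesis .
qed

lemma Gamma_lower:
  fixes v :: real assumes v: "v \<ge> 5"
  shows "((v-2) / exp 1) powr (v-2) \<le> Gamma v"
proof -
  define j where "j = nat \<lfloor>v\<rfloor>"
  have jv: "real j \<le> v" "v < real j + 1" using v unfolding j_def by linarith+
  have j5: "j \<ge> 5" using jv v by linarith
  define t where "t = real (j - 1)"
  have t: "t = real j - 1" "v - 2 \<le> t" using j5 jv by (auto simp: t_def of_nat_diff)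
  have e3: "exp 1 \<le> (3::real)" by (rule exp_le)
  have l3: "1 \<le> ln (v - 2)"
  proof -
    have "exp 1 \<le> v - 2" using e3 v by linarith
    thus ?thesis using v by (subst ln_ge_iff) auto
  qed
  have "((v-2) / exp 1) powr (v-2) = exp ((v-2) * (ln (v-2) - 1))"
    using v by (simp add: powr_def ln_div)
  also have "\<dots> \<le> exp (t * (ln t - 1))"
  proof -
    have "(v-2) * (ln (v-2) - 1) \<le> t * (ln (v-2) - 1)"
      using t l3 by (intro mult_right_mono) auto
    also have "\<dots> \<le> t * (ln t - 1)"
      using t v by (intro mult_left_mono) auto
    finally show ?thesis by simp
  qed
  also have "\<dots> = (t / exp 1) ^ (j - 1)"
  proof -
    have "t > 0" using t v by linarith
    hence "(t / exp 1) ^ (j - 1) = (t / exp 1) powr (real (j - 1))"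
      by (subst powr_realpow) auto
    also have "\<dots> = exp (t * (ln t - 1))"
      using \<open>t > 0\<close> by (simp add: powr_def ln_div t_def mult.commute)
    finally show ?thesis by simp
  qed
  also have "\<dots> \<le> fact (j - 1)" unfolding t_def by (rule fact_lower)
  also have "\<dots> = Gamma (real j)" using j5 by (simp add: Gamma_nat_real)
  also have "\<dots> \<le> Gamma v" using jv j5 by (intro Gamma_mono_real) auto
  finally show ?thesis .
qed


lemma fact_add_le: "(fact (k + n) :: real) \<le> fact k * real (k + n) ^ n"
proof (induction n)
  case (Suc n)
  have "(fact (k + Suc n) :: real) = real (k + Suc n) * fact (k + n)" by simp
  also have "\<dots> \<le> real (k + Suc n) * (fact k * real (k + n) ^ n)"
    using Suc by (intro mult_left_mono) auto
  also have "\<dots> \<le> real (k + Suc n) * (fact k * real (k + Suc n) ^ n)"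
    by (intro mult_left_mono power_mono) auto
  also have "\<dots> = fact k * real (k + Suc n) ^ Suc n" by simp
  finally show ?case .
qed simp

definition Acoef :: "nat \<Rightarrow> real \<Rightarrow> nat \<Rightarrow> real" where
  "Acoef n m k = Gamma (real n + real k) / (fact k * Gamma ((real n + real k) / m))"

lemma Acoef_pos: "n \<ge> 1 \<Longrightarrow> m > 0 \<Longrightarrow> Acoef n m k > 0"
  unfolding Acoef_def by (intro divide_pos_pos mult_pos_pos Gamma_real_pos) auto

lemma Acoef_le:
  assumes "n \<ge> 1" "m > 0"
  shows "Acoef n m k \<le> (real n + real k) ^ n / Gamma ((real n + real k) / m)"
proof -
  have G: "Gamma ((real n + real k) / m) > 0" using assms by (intro Gamma_real_pos) auto
  have "Gamma (real n + real k) = fact (n + k - 1)"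
    using Gamma_nat_real[of "n+k"] assms by simp
  also have "\<dots> \<le> (fact (k + n) :: real)" by (intro fact_mono) auto
  also have "\<dots> \<le> fact k * (real n + real k) ^ n" using fact_add_le[of k n] by (simp add: add.commute)
  finally have "Gamma (real n + real k) \<le> fact k * (real n + real k) ^ n" .
  thus ?thesis unfolding Acoef_def using G
    by (simp add: field_simps)
qed

lemma tail_eventually:
  fixes m :: real assumes m: "m > 0" and n: "n \<ge> 1"
  shows "\<exists>K2. \<forall>k\<ge>K2. \<forall>s. 0 \<le> s \<and> s \<le> 2 * (3 * real k / m^2) powr (1/(2*m)) \<longrightarrow>
            Acoef n m k * s ^ k \<le> (1/2) ^ k"
proof -
  have ev: "eventually (\<lambda>x::real. real n*ln(real n+x) + x*ln 4 + x/(2*m)*ln(3*x/m^2)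
       \<le> ((real n+x)/m-2)*ln(((real n+x)/m-2)/exp 1) \<and> (real n + x)/m \<ge> 5 \<and> x \<ge> 1) at_top"
  proof -
    define nn where "nn = real n"
    have nn: "nn \<ge> 1" using n by (simp add: nn_def)
    have "eventually (\<lambda>x::real. nn*ln(nn+x) + x*ln 4 + x/(2*m)*ln(3*x/m^2)
       \<le> ((nn+x)/m-2)*ln(((nn+x)/m-2)/exp 1)) at_top"
      using m nn by real_asymp
    moreover have "eventually (\<lambda>x::real. (nn + x)/m \<ge> 5) at_top" using m nn by real_asymp
    moreover have "eventually (\<lambda>x::real. x \<ge> 1) at_top" by real_asymp
    ultimately show ?thesis unfolding nn_def by eventually_elim auto
  qed
  then obtain X where X: "\<And>x. x \<ge> X \<Longrightarrow> real n*ln(real n+x) + x*ln 4 + x/(2*m)*ln(3*x/m^2)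
       \<le> ((real n+x)/m-2)*ln(((real n+x)/m-2)/exp 1) \<and> (real n + x)/m \<ge> 5 \<and> x \<ge> 1"
    unfolding eventually_at_top_linorder by blast
  show ?thesis
  proof (intro exI allI impI, elim conjE)
    fix k :: nat and s :: real
    assume k: "nat \<lceil>X\<rceil> \<le> k" and s0: "0 \<le> s" and s1: "s \<le> 2 * (3 * real k / m^2) powr (1/(2*m))"
    have "real k \<ge> X" using k by linarith
    note Xk = X[OF this]
    define v where "v = (real n + real k) / m"
    have v5: "v \<ge> 5" and k1: "real k \<ge> 1" using Xk by (auto simp: v_def)
    have G: "Gamma v > 0" using v5 by auto
    define W where "W = (3 * real k / m^2) powr (1/(2*m))"
    have W0: "W > 0" using k1 m by (auto simp: W_def)
    have "(real n + real k) ^ n * (2 * s) ^ k \<le> (real n + real k) ^ n * (4 * W) ^ k"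
      using s0 s1 by (intro mult_left_mono power_mono) (auto simp: W_def)
    also have "\<dots> = exp (real n*ln(real n+real k) + real k*ln 4 + real k/(2*m)*ln(3*real k/m^2))"
    proof -
      have "(real n + real k) ^ n = exp (real n * ln (real n + real k))"
      proof -
        have "real n + real k > 0" using n by simp
        thus ?thesis by (simp add: exp_of_nat_mult)
      qed
      moreover have "(4 * W) ^ k = exp (real k * ln 4 + real k/(2*m)*ln(3*real k/m^2))"
      proof -
        have "(4 * W) ^ k = exp (real k * ln (4 * W))"
          using W0 by (simp add: exp_of_nat_mult del: power_mult_distrib)
        moreover have "ln (4 * W) = ln 4 + 1/(2*m) * ln (3 * real k / m^2)"
          using W0 k1 m by (simp add: ln_mult W_def ln_powr)
        ultimately show ?thesis by (simp add: algebra_simps)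
      qed
      ultimately show ?thesis by (simp add: exp_add[symmetric] algebra_simps)
    qed
    also have "\<dots> \<le> exp ((v-2)*ln((v-2)/exp 1))" using Xk by (simp add: v_def)
    also have "\<dots> = ((v-2) / exp 1) powr (v-2)" using v5 by (simp add: powr_def mult.commute)
    also have "\<dots> \<le> Gamma v" using v5 by (rule Gamma_lower)
    finally have main: "(real n + real k) ^ n * (2 * s) ^ k \<le> Gamma v" .
    have "Acoef n m k * s ^ k \<le> (real n + real k) ^ n / Gamma v * s ^ k"
      using Acoef_le[OF n m, of k] s0 by (intro mult_right_mono) (auto simp: v_def)
    also have "\<dots> = ((real n + real k) ^ n * (2 * s) ^ k / Gamma v) * (1/2)^k"
      by (simp add: power_mult_distrib field_simps)
    also have "\<dots> \<le> 1 * (1/2)^k"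
      using main G by (intro mult_right_mono) auto
    finally show "Acoef n m k * s ^ k \<le> (1/2) ^ k" by simp
  qed
qed


lemma Acoef_summable:
  fixes m :: real assumes m: "m > 0" and n: "n \<ge> 1" and r: "r \<ge> 0"
  shows "summable (\<lambda>k. Acoef n m k * r ^ k)"
proof -
  obtain K2 where K2: "\<And>k s. k \<ge> K2 \<Longrightarrow> 0 \<le> s \<Longrightarrow> s \<le> 2 * (3 * real k / m^2) powr (1/(2*m)) \<Longrightarrow>
            Acoef n m k * s ^ k \<le> (1/2) ^ k"
    using tail_eventually[OF m n] by blast
  have "eventually (\<lambda>x::real. r \<le> 2 * (3 * x / m^2) powr (1/(2*m))) at_top"
    using m r by real_asymp
  then obtain X where X: "\<And>x. x \<ge> X \<Longrightarrow> r \<le> 2 * (3 * x / m^2) powr (1/(2*m))"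
    unfolding eventually_at_top_linorder by blast
  show ?thesis
  proof (rule summable_comparison_test')
    show "summable (\<lambda>k. (1/2::real) ^ k)" by (rule summable_geometric) simp
    fix k :: nat assume "k \<ge> max K2 (nat \<lceil>X\<rceil>)"
    hence "k \<ge> K2" "real k \<ge> X" by linarith+
    then show "norm (Acoef n m k * r ^ k) \<le> (1/2) ^ k"
      using K2[of k r] X[of "real k"] r Acoef_pos[OF n m, of k] by auto
  qed
qed

definition Eser :: "nat \<Rightarrow> real \<Rightarrow> real \<Rightarrow> complex \<Rightarrow> complex" where
  "Eser n m c w = (\<Sum>k. complex_of_real (c ^ k * Acoef n m k) * w ^ k)"

lemma Eser_summable:
  assumes m: "m > 0" and n: "n \<ge> 1" and c: "c \<ge> 0"
  shows "summable (\<lambda>k. complex_of_real (c ^ k * Acoef n m k) * w ^ k)"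
proof (rule summable_norm_cancel)
  have "summable (\<lambda>k. Acoef n m k * (c * norm w) ^ k)"
    using c by (intro Acoef_summable m n) auto
  moreover have "norm (complex_of_real (c ^ k * Acoef n m k) * w ^ k) = Acoef n m k * (c * norm w) ^ k" for k
    using Acoef_pos[OF n m, of k] c by (simp add: norm_mult norm_power power_mult_distrib abs_mult)
  ultimately show "summable (\<lambda>k. norm (complex_of_real (c ^ k * Acoef n m k) * w ^ k))" by simp
qed

lemma Eser_isCont:
  assumes m: "m > 0" and n: "n \<ge> 1" and c: "c \<ge> 0"
  shows "isCont (Eser n m c) w"
  unfolding Eser_def[abs_def]
  by (rule isCont_powser_converges_everywhere) (rule Eser_summable[OF m n c])

lemma norm_pow_sub_one:
  fixes xi :: complex
  shows "norm ((1 + xi) ^ k - 1) \<le> (1 + norm xi) ^ k - 1"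
proof (induction k)
  case (Suc k)
  have "(1 + xi) ^ Suc k - 1 = ((1 + xi) ^ k - 1) * (1 + xi) + xi" by (simp add: algebra_simps)
  hence "norm ((1 + xi) ^ Suc k - 1) \<le> norm ((1 + xi) ^ k - 1) * norm (1 + xi) + norm xi"
    by (metis norm_mult norm_triangle_ineq)
  also have "\<dots> \<le> ((1 + norm xi) ^ k - 1) * (1 + norm xi) + norm xi"
  proof -
    have "norm (1 + xi) \<le> 1 + norm xi" using norm_triangle_ineq[of 1 xi] by simp
    thus ?thesis using Suc by (intro add_mono mult_mono) auto
  qed
  also have "\<dots> = (1 + norm xi) ^ Suc k - 1" by (simp add: algebra_simps)
  finally show ?case .
qed simp

lemma exp_third: "exp (1/3::real) \<le> 3/2"
proof -
  have "exp (1/3::real) ^ 3 = exp 1" by (simp add: exp_of_nat_mult[symmetric])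
  also have "\<dots> \<le> 3" by (rule exp_le)
  also have "\<dots> \<le> (3/2::real) ^ 3" by (simp add: eval_nat_numeral)
  finally have "exp (1/3::real) ^ 3 \<le> (3/2) ^ 3" .
  thus ?thesis using power_le_imp_le_base[of "exp (1/3::real)" 2 "3/2"] by (simp add: numeral_3_eq_3)
qed

lemma re_pow_lower:
  fixes w :: complex and Z0 eps :: real
  assumes Z0: "Z0 > 0" and eps: "eps \<ge> 0" and w: "norm (w - of_real Z0) \<le> eps * Z0"
    and k: "real k * eps \<le> 1/3"
  shows "Re (w ^ k) \<ge> Z0 ^ k / 2"
proof -
  define xi where "xi = w / of_real Z0 - 1"
  have wx: "w = of_real Z0 * (1 + xi)" using Z0 by (simp add: xi_def field_simps)
  have nxi: "norm xi \<le> eps"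
  proof -
    have "xi = (w - of_real Z0) / of_real Z0" using Z0 by (simp add: xi_def field_simps)
    hence "norm xi = norm (w - of_real Z0) / Z0" using Z0 by (simp add: norm_divide)
    thus ?thesis using w Z0 by (simp add: divide_le_eq)
  qed
  have "(1 + norm xi) ^ k \<le> (1 + eps) ^ k" using nxi by (intro power_mono) auto
  also have "\<dots> \<le> exp eps ^ k" using eps by (intro power_mono) (auto simp: exp_ge_add_one_self add.commute)
  also have "\<dots> = exp (real k * eps)" by (simp add: exp_of_nat_mult)
  also have "\<dots> \<le> exp (1/3)" using k by simp
  also have "\<dots> \<le> 3/2" by (rule exp_third)
  finally have b: "(1 + norm xi) ^ k \<le> 3/2" .
  have "Re ((1 + xi) ^ k) = 1 + Re ((1 + xi) ^ k - 1)" by simp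
  also have "\<dots> \<ge> 1 - norm ((1 + xi) ^ k - 1)" using abs_Re_le_cmod[of "(1 + xi) ^ k - 1"] by linarith
  finally have "Re ((1 + xi) ^ k) \<ge> 1 - ((1 + norm xi) ^ k - 1)"
    using norm_pow_sub_one[of xi k] by linarith
  hence r: "Re ((1 + xi) ^ k) \<ge> 1/2" using b by linarith
  have "w ^ k = of_real (Z0 ^ k) * (1 + xi) ^ k" by (simp add: wx power_mult_distrib)
  hence "Re (w ^ k) = Z0 ^ k * Re ((1 + xi) ^ k)" by (simp add: Re_complex_of_real)
  moreover have "Z0 ^ k * (1/2) \<le> Z0 ^ k * Re ((1 + xi) ^ k)"
    using r Z0 by (intro mult_left_mono) auto
  ultimately show ?thesis by simp
qed



lemma Eser_Re_lower:
  fixes w :: complex and m c Z0 :: real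
  assumes m: "m > 0" and n: "n \<ge> 1" and c: "c > 0" and N: "N \<ge> 1" and Z0: "Z0 > 0"
    and K2: "\<And>k s. k \<ge> K2 \<Longrightarrow> 0 \<le> s \<Longrightarrow> s \<le> 2 * (3 * real k / m^2) powr (1/(2*m)) \<Longrightarrow>
            Acoef n m k * s ^ k \<le> (1/2) ^ k"
    and NK: "N^2 \<ge> K2" and cZ: "c * Z0 = (real N / m) powr (1/m)"
    and w: "norm (w - of_real Z0) \<le> Z0 / (3 * real N ^ 2)"
  shows "Re (Eser n m c w) \<ge> Acoef n m N * (c * Z0) ^ N / 2 - 1"
proof -
  define t where "t k = complex_of_real (c ^ k * Acoef n m k) * w ^ k" for k
  define r where "r k = c ^ k * Acoef n m k * Re (w ^ k)" for k
  have st: "summable t" unfolding t_def using Eser_summable[OF m n] c by auto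
  have rt: "r k = Re (t k)" for k by (simp add: r_def t_def)
  have sr: "summable r" unfolding rt[abs_def] by (rule summable_Re[OF st])
  have E: "Re (Eser n m c w) = suminf r"
    unfolding Eser_def t_def[symmetric] Re_suminf[OF st] rt[symmetric] ..
  define K where "K = N^2 + 1"
  have NK': "N < K" unfolding K_def using N by (simp add: power2_eq_square) (metis One_nat_def le_square less_Suc_eq_le)
  have split: "suminf r = (\<Sum>j. r (j + K)) + sum r {..<K}"
    by (rule suminf_split_initial_segment[OF sr])
  have eps: "norm (w - of_real Z0) \<le> (1 / (3 * real N ^ 2)) * Z0" using w by simp
  have low: "r k \<ge> c ^ k * Acoef n m k * (Z0 ^ k / 2)" if "k < K" for k
  proof -
    have "real k \<le> real N ^ 2" using that unfolding K_def by (metis Suc_eq_plus1 less_Suc_eq_le of_nat_le_iff of_nat_power)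
    hence "real k * (1 / (3 * real N ^ 2)) \<le> 1/3" using N by (simp add: field_simps)
    hence "Re (w ^ k) \<ge> Z0 ^ k / 2" by (intro re_pow_lower[OF Z0 _ eps]) auto
    thus ?thesis unfolding r_def using Acoef_pos[OF n m, of k] c by (intro mult_left_mono) auto
  qed
  have "c ^ N * Acoef n m N * (Z0 ^ N / 2) \<le> r N" using low NK' by auto
  also have "r N \<le> sum r {..<K}"
  proof (rule member_le_sum)
    fix x assume "x \<in> {..<K} - {N}"
    hence "x < K" by auto
    from low[OF this] show "0 \<le> r x" using Acoef_pos[OF n m, of x] c Z0
      by (smt (verit) divide_nonneg_nonneg mult_nonneg_nonneg zero_le_power)
  qed (use NK' in auto)
  finally have head: "sum r {..<K} \<ge> Acoef n m N * (c * Z0) ^ N / 2"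
    by (simp add: power_mult_distrib field_simps)
  have tailb: "r (j + K) \<ge> - ((1/2) ^ K * (1/2) ^ j)" for j
  proof -
    define k where "k = j + K"
    have kK: "k \<ge> K" "k \<ge> K2" using NK unfolding k_def K_def by auto
    have nw: "norm w \<le> 2 * Z0"
    proof -
      have "norm w \<le> norm (w - of_real Z0) + Z0" using norm_triangle_ineq[of "w - of_real Z0" "of_real Z0"] Z0 by simp
      also have "\<dots> \<le> Z0 / (3 * real N ^ 2) + Z0" using w by simp
      also have "Z0 / (3 * real N ^ 2) \<le> Z0 / 1"
      proof (intro divide_left_mono)
        have "real N \<ge> 1" using N by simp
        hence "real N ^ 2 \<ge> 1" by (simp add: one_le_power)
        thus "1 \<le> 3 * real N ^ 2" by linarith
      qed (use Z0 N in auto)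
      finally show ?thesis by simp
    qed
    have s: "c * norm w \<le> 2 * (3 * real k / m^2) powr (1/(2*m))"
    proof -
      have "c * norm w \<le> 2 * (c * Z0)" using nw c by simp
      also have "c * Z0 = (real N / m) powr (2 * (1/(2*m)))" using cZ m by simp
      also have "\<dots> = ((real N / m) powr 2) powr (1/(2*m))" by (simp only: powr_powr)
      also have "\<dots> \<le> (3 * real k / m^2) powr (1/(2*m))"
      proof (intro powr_mono2)
        have "real N ^ 2 \<le> real k" using kK unfolding K_def by (metis Suc_eq_plus1 Suc_leD of_nat_le_iff of_nat_power)
        hence "real N ^ 2 \<le> 3 * real k" by linarith
        hence "real N ^ 2 / m^2 \<le> 3 * real k / m^2" using m by (intro divide_right_mono) auto
        thus "(real N / m) powr 2 \<le> 3 * real k / m^2" using m N by (simp add: power_divide)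
      qed (use m in auto)
      finally show ?thesis by simp
    qed
    have "\<bar>r k\<bar> \<le> c ^ k * Acoef n m k * norm w ^ k"
      unfolding r_def using Acoef_pos[OF n m, of k] c abs_Re_le_cmod[of "w^k"]
      by (simp add: abs_mult norm_power mult_left_mono)
    also have "\<dots> = Acoef n m k * (c * norm w) ^ k" by (simp add: power_mult_distrib)
    also have "\<dots> \<le> (1/2) ^ k" using K2[OF kK(2) _ s] c by auto
    also have "\<dots> = (1/2) ^ K * (1/2) ^ j" by (simp add: k_def power_add)
    finally show ?thesis unfolding k_def by linarith
  qed
  have sg: "summable (\<lambda>j. - ((1/2::real) ^ K * (1/2) ^ j))"
    by (intro summable_minus summable_mult summable_geometric) auto
  have "(\<Sum>j. - ((1/2::real) ^ K * (1/2) ^ j)) \<le> (\<Sum>j. r (j + K))"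
    by (intro suminf_le sg tailb summable_ignore_initial_segment sr)
  moreover have "(\<Sum>j. - ((1/2::real) ^ K * (1/2) ^ j)) = - ((1/2) ^ K * 2)"
    by (subst suminf_minus) (auto intro!: summable_geometric simp: suminf_mult suminf_geometric)
  moreover have "(1/2::real) ^ K \<le> 1/2" unfolding K_def by (simp add: power_le_one)
  ultimately have "(\<Sum>j. r (j + K)) \<ge> -1" by linarith
  thus ?thesis using E split head by linarith
qed


lemma kernel_eq:
  "kernel b m x y = complex_of_real (m * b powr (real CARD('n) / m) / pi ^ CARD('n)) *
      Eser CARD('n) m (b powr (1/m)) (cinner x (y :: complex ^ ('n::finite)))"
  unfolding kernel_def Eser_def
proof (intro arg_cong[where f="\<lambda>s. _ * s"] suminf_cong)
  fix k
  show "(complex_of_real (b powr (1 / m)) * cinner x y) ^ k / of_nat (fact k) *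
        complex_of_real (Gamma (real CARD('n) + real k) / Gamma ((real CARD('n) + real k) / m)) =
        complex_of_real ((b powr (1 / m)) ^ k * Acoef CARD('n) m k) * cinner x y ^ k"
    unfolding Acoef_def by (simp add: power_mult_distrib field_simps)
qed

lemma cinner_diff_left: "cinner (x - x') y = cinner x y - cinner x' y"
  unfolding cinner_def by (simp add: algebra_simps sum_subtractf)

lemma cinner_diff_right: "cinner x (y - y') = cinner x y - cinner x y'"
  unfolding cinner_def by (simp add: algebra_simps sum_subtractf)

lemma norm_cinner: "norm (cinner x y) \<le> norm x * norm y"
proof -
  have "norm (cinner x y) \<le> (\<Sum>j\<in>UNIV. norm (x $ j) * norm (y $ j))"
    unfolding cinner_def by (rule order.trans[OF norm_sum]) (simp add: norm_mult)
  also have "\<dots> \<le> L2_set (\<lambda>j. norm (x $ j)) UNIV * L2_set (\<lambda>j. norm (y $ j)) UNIV"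
    using L2_set_mult_ineq[of "\<lambda>j. norm (x $ j)" "\<lambda>j. norm (y $ j)" UNIV] by simp
  also have "\<dots> = norm x * norm y" by (simp add: norm_vec_def)
  finally show ?thesis .
qed

lemma cinner_axis: "cinner (T *\<^sub>R axis i (1::complex)) (R *\<^sub>R axis i 1) = complex_of_real (T * R)"
proof -
  have e: "(T *\<^sub>R axis i (1::complex)) $ j = (if j = i then complex_of_real T else 0)" for T j
    by (simp only: vector_scaleR_component) (simp add: axis_def scaleR_conv_of_real)
  show ?thesis unfolding cinner_def e by (simp add: if_distrib cong: if_cong)
qed

lemma norm_axis: "norm (axis i (1::complex)) = 1"
  by (simp add: inner_axis' norm_eq_1)

lemma norm_axis1: "norm (T *\<^sub>R axis i (1::complex)) = \<bar>T\<bar>"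
  by (simp add: norm_axis)

lemma cinner_dev:
  fixes x y :: "complex ^ ('n::finite)"
  assumes "x \<in> ball (T *\<^sub>R axis i 1) eta" "y \<in> ball (R *\<^sub>R axis i 1) eta" "T \<ge> 0" "R \<ge> 0"
  shows "norm (cinner x y - of_real (T * R)) \<le> eta * (R + eta) + T * eta"
proof -
  let ?e = "axis i (1::complex)"
  have "cinner x y - of_real (T * R) = cinner (x - T *\<^sub>R ?e) y + cinner (T *\<^sub>R ?e) (y - R *\<^sub>R ?e)"
    by (simp add: cinner_diff_left cinner_diff_right cinner_axis)
  hence "norm (cinner x y - of_real (T * R)) \<le> norm (x - T *\<^sub>R ?e) * norm y + norm (T *\<^sub>R ?e) * norm (y - R *\<^sub>R ?e)"
  proof -
    have "norm (cinner (x - T *\<^sub>R ?e) y + cinner (T *\<^sub>R ?e) (y - R *\<^sub>R ?e))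
       \<le> norm (cinner (x - T *\<^sub>R ?e) y) + norm (cinner (T *\<^sub>R ?e) (y - R *\<^sub>R ?e))"
      by (rule norm_triangle_ineq)
    also have "\<dots> \<le> norm (x - T *\<^sub>R ?e) * norm y + norm (T *\<^sub>R ?e) * norm (y - R *\<^sub>R ?e)"
      by (intro add_mono norm_cinner)
    finally show ?thesis using \<open>cinner x y - of_real (T * R) = _\<close> by simp
  qed
  also have "\<dots> \<le> eta * (R + eta) + T * eta"
  proof (intro add_mono mult_mono)
    show "norm (x - T *\<^sub>R ?e) \<le> eta" using assms(1) by (simp add: dist_norm norm_minus_commute)
    show "norm y \<le> R + eta"
      using assms(2) norm_triangle_ineq[of "y - R *\<^sub>R ?e" "R *\<^sub>R ?e"] assms(4)
      by (simp add: dist_norm norm_minus_commute norm_axis)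
    show "norm (T *\<^sub>R ?e) \<le> T" using assms(3) by (simp add: norm_axis)
    show "norm (y - R *\<^sub>R ?e) \<le> eta" using assms(2) by (simp add: dist_norm norm_minus_commute)
  qed (use assms in \<open>auto simp: dist_norm intro: order.trans[OF norm_ge_zero less_imp_le]\<close>)
  finally show ?thesis .
qed


lemma cont_normpow: "m > 0 \<Longrightarrow> continuous_on UNIV (\<lambda>z::complex^('n::finite). norm z powr (2*m))"
  by (intro continuous_on_powr' continuous_intros) auto

lemma meas_normpow: "m > 0 \<Longrightarrow> (\<lambda>z::complex^('n::finite). norm z powr (2*m)) \<in> borel_measurable lborel"
  using borel_measurable_continuous_onI[OF cont_normpow] by simp

lemma meas_dens: "m > 0 \<Longrightarrow> (\<lambda>z::complex^('n::finite). exp (- a * norm z powr (2*m))) \<in> borel_measurable lborel"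
  using meas_normpow[of m] by measurable

lemma mu_integral:
  fixes g :: "complex^('n::finite) \<Rightarrow> 'b::{banach, second_countable_topology}"
  assumes "m > 0" "g \<in> borel_measurable lborel"
  shows "integral\<^sup>L (mu a m) g = integral\<^sup>L lborel (\<lambda>z. exp (- a * norm z powr (2*m)) *\<^sub>R g z)"
  unfolding mu_def by (rule integral_density) (use assms meas_dens in auto)

lemma mu_integrable:
  fixes g :: "complex^('n::finite) \<Rightarrow> 'b::{banach, second_countable_topology}"
  assumes "m > 0" "g \<in> borel_measurable lborel"
  shows "integrable (mu a m) g \<longleftrightarrow> integrable lborel (\<lambda>z. exp (- a * norm z powr (2*m)) *\<^sub>R g z)"
  unfolding mu_def by (rule integrable_density) (use assms meas_dens in auto)

lemma mu_nn:
  fixes g :: "complex^('n::finite) \<Rightarrow> ennreal"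
  assumes "m > 0" "g \<in> borel_measurable lborel"
  shows "(\<integral>\<^sup>+ z. g z \<partial>mu a m) = (\<integral>\<^sup>+ z. ennreal (exp (- a * norm z powr (2*m))) * g z \<partial>lborel)"
  unfolding mu_def by (rule nn_integral_density) (use assms meas_dens in auto)

lemma integrable_ind_ball:
  fixes h :: "complex^('n::finite) \<Rightarrow> 'b::{banach, second_countable_topology}"
  assumes h: "continuous_on UNIV h"
  shows "integrable lborel (\<lambda>z. indicator (ball c r) z *\<^sub>R h z)"
proof -
  have "compact (h ` cball c r)" by (intro compact_continuous_image continuous_on_subset[OF h]) auto
  then obtain M where M: "\<And>z. z \<in> cball c r \<Longrightarrow> norm (h z) \<le> M"
    by (meson bounded_iff compact_imp_bounded image_eqI)
  have hm: "h \<in> borel_measurable lborel" using borel_measurable_continuous_onI[OF h] by simp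
  show ?thesis
  proof (rule integrableI_bounded_set[where A="cball c r" and B=M])
    show "(\<lambda>z. indicator (ball c r) z *\<^sub>R h z) \<in> borel_measurable lborel"
      by (intro borel_measurable_scaleR borel_measurable_indicator hm) auto
    show "emeasure lborel (cball c r) < \<infinity>" by (rule emeasure_lborel_cball_finite)
    show "AE x in lborel. x \<in> cball c r \<longrightarrow> norm (indicator (ball c r) x *\<^sub>R h x) \<le> M"
      using M by (auto simp: indicator_def intro: order.trans[OF norm_ge_zero])
    show "AE x in lborel. x \<notin> cball c r \<longrightarrow> indicator (ball c r) x *\<^sub>R h x = 0"
      by (auto simp: indicator_def)
  qed auto
qed

lemma ball_borel[measurable]: "ball (c::'a::metric_space) r \<in> sets borel" by simp

definition fB :: "complex^('n::finite) \<Rightarrow> real \<Rightarrow> real \<Rightarrow> real \<Rightarrow> complex^'n \<Rightarrow> complex" where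
  "fB c r b m y = complex_of_real (exp (b * norm y powr (2*m)) * indicator (ball c r) y)"

lemma fB_meas: assumes "m > 0" shows "fB c r b m \<in> borel_measurable lborel"
proof -
  have "(\<lambda>z::complex^'n. norm z powr (2*m)) \<in> borel_measurable lborel" using meas_normpow assms by blast
  thus ?thesis unfolding fB_def[abs_def] by measurable
qed

lemma norm_fB_powr:
  assumes "p > 0"
  shows "norm (fB c r b m y) powr p = indicator (ball c r) y * exp (p * b * norm y powr (2*m))"
  using assms by (auto simp: fB_def indicator_def powr_def)

lemma fB_inLp:
  assumes m: "m > 0" and p: "p > 0"
  shows "inLp p a m (fB c r b m)"
  unfolding inLp_def
proof
  show "fB c r b m \<in> borel_measurable lborel" by (rule fB_meas[OF m])
  have meas: "(\<lambda>z. norm (fB c r b m z) powr p) \<in> borel_measurable lborel"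
    using fB_meas[OF m, of c r b] by measurable
  have eq: "(\<lambda>z. exp (- a * norm z powr (2*m)) *\<^sub>R (norm (fB c r b m z) powr p)) =
        (\<lambda>z. indicator (ball c r) z *\<^sub>R exp ((p * b - a) * norm z powr (2*m)))"
    by (auto simp: norm_fB_powr[OF p] indicator_def exp_add[symmetric] algebra_simps)
  have "integrable lborel (\<lambda>z. indicator (ball c r) z *\<^sub>R exp ((p * b - a) * norm z powr (2*m)))"
    by (intro integrable_ind_ball continuous_intros cont_normpow m)
  thus "integrable (mu a m) (\<lambda>z. norm (fB c r b m z) powr p)"
    by (subst mu_integrable[OF m meas]) (simp only: eq)
qed

lemma fB_Lpnorm:
  assumes m: "m > 0" and p: "p > 0"
    and M: "\<And>y. y \<in> ball c r \<Longrightarrow> (p * b - a) * norm y powr (2*m) \<le> M"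
  shows "Lpnorm p a m (fB c r b m) \<le> (measure lborel (ball c r) * exp M) powr (1/p)"
proof -
  have meas: "(\<lambda>z. norm (fB c r b m z) powr p) \<in> borel_measurable lborel"
    using fB_meas[OF m, of c r b] by measurable
  have eq: "(\<lambda>z. exp (- a * norm z powr (2*m)) *\<^sub>R (norm (fB c r b m z) powr p)) =
        (\<lambda>z. indicator (ball c r) z *\<^sub>R exp ((p * b - a) * norm z powr (2*m)))"
    by (auto simp: norm_fB_powr[OF p] indicator_def exp_add[symmetric] algebra_simps)
  have I: "integral\<^sup>L (mu a m) (\<lambda>z. norm (fB c r b m z) powr p) =
      integral\<^sup>L lborel (\<lambda>z. indicator (ball c r) z *\<^sub>R exp ((p * b - a) * norm z powr (2*m)))"
    by (subst mu_integral[OF m meas]) (simp only: eq)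
  have int1: "integrable lborel (\<lambda>z. indicator (ball c r) z *\<^sub>R exp ((p * b - a) * norm z powr (2*m)))"
    by (intro integrable_ind_ball continuous_intros cont_normpow m)
  have int2: "integrable lborel (\<lambda>z. indicator (ball c r) z *\<^sub>R exp M)"
    by (intro integrable_ind_ball continuous_intros)
  have "integral\<^sup>L lborel (\<lambda>z. indicator (ball c r) z *\<^sub>R exp ((p * b - a) * norm z powr (2*m)))
      \<le> integral\<^sup>L lborel (\<lambda>z. indicator (ball c r) z *\<^sub>R exp M)"
    using M by (intro integral_mono int1 int2) (auto simp: indicator_def)
  also have "\<dots> = measure lborel (ball c r) * exp M"
    by (simp add: integral_indicator emeasure_lborel_ball_finite)
  finally have le: "integral\<^sup>L (mu a m) (\<lambda>z. norm (fB c r b m z) powr p) \<le> measure lborel (ball c r) * exp M"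
    using I by simp
  have nn: "0 \<le> integral\<^sup>L (mu a m) (\<lambda>z. norm (fB c r b m z) powr p)" by simp
  show ?thesis unfolding Lpnorm_def using le nn p by (intro powr_mono2) auto
qed




lemma cinner_cont: "continuous_on UNIV (\<lambda>y. cinner x (y :: complex^('n::finite)))"
  unfolding cinner_def by (intro continuous_intros)

lemma kernel_cont:
  assumes m: "m > 0"
  shows "continuous_on UNIV (\<lambda>y. kernel b m x (y :: complex^('n::finite)))"
proof -
  have n: "CARD('n) \<ge> 1" by (simp add: Suc_le_eq)
  have E: "continuous_on UNIV (Eser CARD('n) m (b powr (1/m)))"
    by (intro continuous_at_imp_continuous_on ballI Eser_isCont m n) auto
  show ?thesis unfolding kernel_eq
    by (intro continuous_intros continuous_on_compose2[OF E cinner_cont]) auto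
qed

lemma Proj_fB_lower:
  fixes x c :: "complex^('n::finite)"
  assumes m: "m > 0" and Kmin: "\<And>y. y \<in> ball c r \<Longrightarrow> Kmin \<le> Re (kernel b m x y)"
  shows "Kmin * measure lborel (ball c r) \<le> norm (Proj b m (fB c r b m) x)"
proof -
  define K where "K y = kernel b m x y" for y
  have contK: "continuous_on UNIV K" unfolding K_def[abs_def] by (rule kernel_cont[OF m])
  have mK: "K \<in> borel_measurable lborel" using borel_measurable_continuous_onI[OF contK] by simp
  have mprod: "(\<lambda>y. fB c r b m y * K y) \<in> borel_measurable lborel"
    using fB_meas[OF m, of c r b] mK by measurable
  have "Proj b m (fB c r b m) x = integral\<^sup>L lborel (\<lambda>y. exp (- b * norm y powr (2*m)) *\<^sub>R (fB c r b m y * K y))"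
    unfolding Proj_def K_def[symmetric] by (rule mu_integral[OF m mprod])
  also have "\<dots> = integral\<^sup>L lborel (\<lambda>y. indicator (ball c r) y *\<^sub>R K y)"
  proof (intro Bochner_Integration.integral_cong refl)
    fix y :: "complex^'n"
    have "exp (- b * norm y powr (2*m)) * exp (b * norm y powr (2*m)) = 1"
      by (simp add: exp_add[symmetric])
    thus "exp (- b * norm y powr (2*m)) *\<^sub>R (fB c r b m y * K y) = indicator (ball c r) y *\<^sub>R K y"
      unfolding fB_def scaleR_conv_of_real
      by (simp add: indicator_def mult.assoc[symmetric] of_real_mult[symmetric] del: of_real_mult)
  qed
  finally have P: "Proj b m (fB c r b m) x = integral\<^sup>L lborel (\<lambda>y. indicator (ball c r) y *\<^sub>R K y)" .
  have intK: "integrable lborel (\<lambda>y. indicator (ball c r) y *\<^sub>R K y)"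
    by (rule integrable_ind_ball[OF contK])
  have "Re (Proj b m (fB c r b m) x) = integral\<^sup>L lborel (\<lambda>y. Re (indicator (ball c r) y *\<^sub>R K y))"
    unfolding P by (rule integral_Re[OF intK, symmetric])
  also have "\<dots> = integral\<^sup>L lborel (\<lambda>y. indicator (ball c r) y *\<^sub>R Re (K y))"
    by (simp add: scaleR_conv_of_real)
  also have "\<dots> \<ge> integral\<^sup>L lborel (\<lambda>y. indicator (ball c r) y *\<^sub>R Kmin)"
  proof (intro integral_mono)
    show "integrable lborel (\<lambda>y. indicator (ball c r) y *\<^sub>R Kmin)"
      by (intro integrable_ind_ball continuous_intros)
    have "continuous_on UNIV (\<lambda>y. Re (K y))" by (intro continuous_intros contK)
    thus "integrable lborel (\<lambda>y. indicator (ball c r) y *\<^sub>R Re (K y))"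
      by (rule integrable_ind_ball)
    fix y show "indicator (ball c r) y *\<^sub>R Kmin \<le> indicator (ball c r) y *\<^sub>R Re (K y)"
      using Kmin by (auto simp: indicator_def K_def)
  qed
  also have "integral\<^sup>L lborel (\<lambda>y. indicator (ball c r) y *\<^sub>R Kmin) = Kmin * measure lborel (ball c r)"
    by (simp add: integral_indicator emeasure_lborel_ball_finite)
  finally show ?thesis using complex_Re_le_cmod[of "Proj b m (fB c r b m) x"] by linarith
qed

lemma LHS_lower:
  fixes P :: "complex^('n::finite) \<Rightarrow> complex" and c :: "complex^'n"
  assumes m: "m > 0" and g: "g \<ge> 0" and q: "q > 0" and meas: "P \<in> borel_measurable lborel"
    and P0: "P0 \<ge> 0" and bnd: "\<And>x. x \<in> ball c r \<Longrightarrow> P0 \<le> norm (P x) \<and> norm x \<le> rho"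
  shows "ennreal (measure lborel (ball c r) * exp (- g * rho powr (2*m)) * P0 powr q)
           \<le> (\<integral>\<^sup>+ x. ennreal (norm (P x) powr q) \<partial>mu g m)"
proof -
  have mP: "(\<lambda>x. ennreal (norm (P x) powr q)) \<in> borel_measurable lborel" using meas by measurable
  have "ennreal (measure lborel (ball c r) * exp (- g * rho powr (2*m)) * P0 powr q)
      = ennreal (exp (- g * rho powr (2*m)) * P0 powr q) * emeasure lborel (ball c r)"
  proof -
    have em: "emeasure lborel (ball c r) = ennreal (measure lborel (ball c r))"
      using emeasure_lborel_ball_finite[of c r] by (simp add: emeasure_eq_ennreal_measure top.not_eq_extremum)
    have "measure lborel (ball c r) * exp (- g * rho powr (2*m)) * P0 powr q
        = (exp (- g * rho powr (2*m)) * P0 powr q) * measure lborel (ball c r)" by simp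
    thus ?thesis unfolding em using P0 by (simp only:) (rule ennreal_mult; simp)
  qed
  also have "\<dots> = (\<integral>\<^sup>+ x. ennreal (exp (- g * rho powr (2*m)) * P0 powr q) * indicator (ball c r) x \<partial>lborel)"
    by (simp add: nn_integral_cmult_indicator)
  also have "\<dots> \<le> (\<integral>\<^sup>+ x. ennreal (exp (- g * norm x powr (2*m))) * ennreal (norm (P x) powr q) \<partial>lborel)"
  proof (intro nn_integral_mono)
    fix x
    show "ennreal (exp (- g * rho powr (2*m)) * P0 powr q) * indicator (ball c r) x
          \<le> ennreal (exp (- g * norm x powr (2*m))) * ennreal (norm (P x) powr q)"
    proof (cases "x \<in> ball c r")
      case True
      from bnd[OF True] have b1: "P0 \<le> norm (P x)" and b2: "norm x \<le> rho" by auto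
      have "norm x powr (2*m) \<le> rho powr (2*m)" using b2 m by (intro powr_mono2) auto
      hence e: "exp (- g * rho powr (2*m)) \<le> exp (- g * norm x powr (2*m))"
        using g by (simp add: mult_left_mono)
      have pq: "P0 powr q \<le> norm (P x) powr q" using b1 P0 q by (intro powr_mono2) auto
      have "exp (- g * rho powr (2*m)) * P0 powr q \<le> exp (- g * norm x powr (2*m)) * norm (P x) powr q"
        using e pq by (intro mult_mono) auto
      thus ?thesis using True by (simp add: ennreal_mult[symmetric])
    qed simp
  qed
  also have "\<dots> = (\<integral>\<^sup>+ x. ennreal (norm (P x) powr q) \<partial>mu g m)"
    by (rule mu_nn[OF m mP, symmetric])
  finally show ?thesis .
qed


lemma exp_le_1_2x: "0 \<le> x \<Longrightarrow> x \<le> 1/2 \<Longrightarrow> exp x \<le> 1 + 2 * (x::real)"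
proof -
  assume x: "0 \<le> x" "x \<le> 1/2"
  have "1 - x \<le> exp (-x)" using exp_ge_add_one_self[of "-x"] by simp
  hence "exp x * (1 - x) \<le> exp x * exp (-x)" by (intro mult_left_mono) auto
  hence "exp x * (1 - x) \<le> 1" by (simp add: exp_minus)
  hence "exp x \<le> 1 / (1 - x)" using x by (simp add: field_simps)
  also have "\<dots> \<le> 1 + 2 * x" using x by (simp add: field_simps) (use mult_left_mono[of "x*2" 1 x] in simp)
  finally show ?thesis .
qed

lemma powr_pert_up:
  fixes X h r :: real
  assumes X: "X > 0" and r: "r > 0" and h: "h \<ge> 0" and small: "r * h / X \<le> 1/2"
  shows "(X + h) powr r \<le> X powr r * (1 + 2 * r * h / X)"
proof -
  have "X + h = X * (1 + h / X)" using X by (simp add: field_simps)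
  moreover have pos: "1 + h / X > 0" using X h by (metis add_pos_nonneg divide_nonneg_pos zero_less_one)
  ultimately have "(X + h) powr r = X powr r * (1 + h / X) powr r" using X by (simp add: powr_mult)
  also have "(1 + h / X) powr r = exp (r * ln (1 + h / X))" using pos by (simp add: powr_def)
  also have "\<dots> \<le> exp (r * (h / X))"
    using X h r by (intro exp_mono mult_left_mono ln_add_one_self_le_self) auto
  also have "\<dots> \<le> 1 + 2 * (r * (h / X))"
    using X h r small by (intro exp_le_1_2x) auto
  finally show ?thesis using X by (simp add: mult_left_mono mult.assoc)
qed

lemma powr_pert_down:
  fixes X h r :: real
  assumes X: "X > 0" and r: "r > 0" and h: "h \<ge> 0" and hX: "h \<le> X / 2" and small: "r * h / X \<le> 1/2"
  shows "X powr r * (1 - 2 * r * h / X) \<le> (X - h) powr r"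
proof -
  define t where "t = h / X"
  have t: "0 \<le> t" "t \<le> 1/2" using X h hX by (auto simp: t_def field_simps)
  have "X - h = X * (1 - t)" using X by (simp add: t_def field_simps)
  hence eq: "(X - h) powr r = X powr r * (1 - t) powr r" using X t by (simp add: powr_mult)
  have lnl: "ln (1 - t) \<ge> -2 * t"
  proof -
    have "ln (1 / (1 - t)) \<le> 1 / (1 - t) - 1" using t by (intro ln_le_minus_one) auto
    hence "- ln (1 - t) \<le> t / (1 - t)" using t by (simp add: ln_div field_simps)
    also have "\<dots> \<le> 2 * t" using t by (simp add: field_simps) (use mult_left_mono[of "t*2" 1 t] in simp)
    finally show ?thesis by simp
  qed
  have "1 - 2 * r * t \<le> exp (-2 * r * t)" using exp_ge_add_one_self[of "-2*r*t"] by simp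
  also have "\<dots> \<le> exp (r * ln (1 - t))"
  proof -
    have "r * (-2 * t) \<le> r * ln (1 - t)" using lnl r by (intro mult_left_mono) auto
    thus ?thesis by (simp add: algebra_simps)
  qed
  also have "\<dots> = (1 - t) powr r" using t by (simp add: powr_def)
  finally have "1 - 2 * r * t \<le> (1 - t) powr r" .
  hence "X powr r * (1 - 2 * r * t) \<le> X powr r * (1 - t) powr r" by (intro mult_left_mono) auto
  thus ?thesis unfolding eq by (simp add: t_def)
qed

lemma AZ_lower:
  fixes m :: real and n N :: nat
  assumes m: "m > 0" and n: "n \<ge> 1" and v2: "(real n + real N) / m \<ge> 2"
  shows "Acoef n m N * ((real N / m) powr (1/m)) ^ N \<ge>
     exp (real N / m * ln (real N / m) + (real n + real N) / m - 1 - ((real n + real N) / m + 2) * ln ((real n + real N) / m + 1))"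
proof -
  define v where "v = (real n + real N) / m"
  have G: "Gamma v > 0" using v2 by (auto simp: v_def)
  have A: "Acoef n m N \<ge> 1 / Gamma v"
  proof -
    have "Gamma (real n + real N) = fact (n + N - 1)" using Gamma_nat_real[of "n+N"] n by simp
    also have "(fact (n + N - 1) :: real) \<ge> fact N" by (intro fact_mono) (use n in auto)
    finally have "Gamma (real n + real N) \<ge> fact N" .
    thus ?thesis unfolding Acoef_def v_def[symmetric] using G
      by (simp add: field_simps)
  qed
  have Gu: "Gamma v \<le> exp (1 + (v + 2) * ln (v + 1) - v)"
  proof -
    have "Gamma v \<le> exp 1 * (v+1) powr (v+2) * exp (- v)" using v2 by (intro Gamma_upper) (auto simp: v_def)
    also have "\<dots> = exp (1 + (v + 2) * ln (v + 1) - v)"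
      using v2 by (simp add: powr_def exp_add[symmetric] exp_diff v_def mult.commute)
    finally show ?thesis .
  qed
  have Z: "((real N / m) powr (1/m)) ^ N = exp (real N / m * ln (real N / m))"
  proof (cases "N = 0")
    case True thus ?thesis by simp
  next
    case False
    hence "real N / m > 0" using m by auto
    hence "((real N / m) powr (1/m)) ^ N = ((real N / m) powr (1/m)) powr (real N)"
      using False by (subst powr_realpow) auto
    also have "\<dots> = (real N / m) powr (1/m * real N)" by (simp add: powr_powr)
    finally have "((real N / m) powr (1/m)) ^ N = (real N / m) powr (1/m * real N)" .
    thus ?thesis using \<open>real N / m > 0\<close> False m by (simp add: powr_def)
  qed
  have "exp (real N / m * ln (real N / m) + v - 1 - (v + 2) * ln (v + 1))
      = exp (real N / m * ln (real N / m)) / exp (1 + (v + 2) * ln (v + 1) - v)"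
    by (simp add: exp_diff[symmetric] algebra_simps)
  also have "\<dots> \<le> exp (real N / m * ln (real N / m)) / Gamma v"
    using G Gu by (intro divide_left_mono) auto
  also have "\<dots> \<le> Acoef n m N * exp (real N / m * ln (real N / m))"
    using A by (simp add: divide_inverse mult.commute mult_left_mono)
  finally show ?thesis unfolding Z v_def by simp
qed




lemma powr_abs_base: "(x::real) powr q = \<bar>x\<bar> powr q"
  unfolding powr_def ln_real_def by simp

theorem proposition7:
  fixes m a b g p q :: real
  assumes "m > 0" and "b > 0" and "g > 0"
    and "1 \<le> p" and "1 \<le> q"
    and "P_bounded b m p a q g TYPE('n::finite)"
  shows "4 * g / (b\<^sup>2 * q) * (b - a / p) \<ge> 1 \<and> b - a / p > 0"
proof -
  note m = assms(1) and b = assms(2) and g = assms(3) and p = assms(4) and q = assms(5)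
  have key: "q * b^2 \<le> 4 * g * (b - a / p)"
  proof (rule ccontr)
    assume contra: "\<not> q * b^2 \<le> 4 * g * (b - a / p)"
    obtain C where HC: "\<And>f :: complex ^ 'n \<Rightarrow> complex. inLp 2 b m f \<Longrightarrow> inLp p a m f \<Longrightarrow>
          Proj b m f \<in> borel_measurable lborel \<and>
          (\<integral>\<^sup>+ z. ennreal (norm (Proj b m f z) powr q) \<partial>mu g m) \<le> ennreal ((C * Lpnorm p a m f) powr q)"
      using assms(6) unfolding P_bounded_def by blast
    define n where "n = CARD('n)"
    have n: "n \<ge> 1" unfolding n_def by (simp add: Suc_le_eq)
    define c where "c = b powr (1/m)"
    define la where "la = m * b^2 * q / (2 * g)"
    define ka where "ka = (b * q / (2 * g)) powr (1/m)"
    define muu where "muu = min ka 1"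
    define C0 where "C0 = m * b powr (real n / m) / pi ^ n"
    define C1 where "C1 = \<bar>C\<bar> + 1"
    define V0 where "V0 = unit_ball_vol (real (n * 2))"
    define sg where "sg = q / (2 * m) - (q / p) * (p * b - a) / la"
    define K where "K = (q / p) * \<bar>p * b - a\<bar> * (4 * m / la)"
    have c: "c > 0" unfolding c_def using b by simp
    have la: "la > 0" unfolding la_def using m b g q by simp
    have ka: "ka > 0" unfolding ka_def using b g q by simp
    have muu: "muu > 0" "muu \<le> 1" "muu \<le> ka" unfolding muu_def using ka by auto
    have C0: "C0 > 0" unfolding C0_def using m b by simp
    have C1: "C1 > 0" unfolding C1_def by simp
    have V0: "V0 > 0" unfolding V0_def by simp
    have sg: "sg > 0"
    proof -
      have "(q / p) * (p * b - a) = q * (b - a / p)" using p by (simp add: field_simps)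
      hence "sg = q / (2 * m) - q * (b - a / p) / la" unfolding sg_def by simp
      also have "\<dots> = (q * b^2 - 4 * g * (b - a / p)) / (2 * m * b^2)"
        unfolding la_def using m b g q by (simp add: field_simps)
      finally show ?thesis using contra m b by simp
    qed
    obtain K2 where K2: "\<And>k s. k \<ge> K2 \<Longrightarrow> 0 \<le> s \<Longrightarrow> s \<le> 2 * (3 * real k / m^2) powr (1/(2*m)) \<Longrightarrow>
            Acoef n m k * s ^ k \<le> (1/2) ^ k"
      using tail_eventually[OF m n] by blast
    define F where "F x = x/m * ln (x/m) + (real n + x)/m - 1 - ((real n + x)/m + 2) * ln ((real n + x)/m + 1)" for x
    define lV where "lV x = ln V0 + real (n*2) * (ln muu + (1/(2*m)) * ln (x/la) - ln 12 - 2 * ln x)" for x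
    define Psi where "Psi x = (1 + q - q/p) * lV x - q + q * (ln C0 + (F x - x/m) - ln 4) - q * ln C1 - K" for x
    have ev: "eventually (\<lambda>x. x \<ge> m + 1 \<and> ln 4 \<le> F x \<and> (real n + x) / m \<ge> 2 \<and> 0 < sg * x + Psi x) at_top"
    proof -
      define nn where "nn = real n"
      have nn: "nn \<ge> 1" using n by (simp add: nn_def)
      have "eventually (\<lambda>x::real. x \<ge> m + 1) at_top" by real_asymp
      moreover have "eventually (\<lambda>x. ln 4 \<le> x/m * ln (x/m) + (nn+x)/m - 1 - ((nn+x)/m+2) * ln ((nn+x)/m+1)) at_top"
        using nn m by real_asymp
      moreover have "eventually (\<lambda>x::real. (nn + x) / m \<ge> 2) at_top" using nn m by real_asymp
      moreover have "eventually (\<lambda>x::real. 0 < sg * x + ((1 + q - q/p) * (ln V0 + 2*nn*(ln muu + (1/(2*m)) * ln (x/la) - ln 12 - 2 * ln x))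
         - q + q * (ln C0 + (x/m * ln (x/m) + (nn+x)/m - 1 - ((nn+x)/m+2) * ln ((nn+x)/m+1) - x/m) - ln 4) - q * ln C1 - K)) at_top"
        using nn m la muu q p C0 C1 V0 sg by real_asymp
      ultimately show ?thesis
        unfolding Psi_def lV_def F_def nn_def by eventually_elim (auto simp: algebra_simps)
    qed
    then obtain X where X: "\<And>x. x \<ge> X \<Longrightarrow> x \<ge> m + 1 \<and> ln 4 \<le> F x \<and> (real n + x) / m \<ge> 2 \<and> 0 < sg * x + Psi x"
      unfolding eventually_at_top_linorder by blast
    define N where "N = nat \<lceil>X\<rceil> + K2 + 1"
    have NX: "real N \<ge> X" unfolding N_def by linarith
    note XN = X[OF NX]
    have N1: "N \<ge> 1" and NK2: "N \<ge> K2" unfolding N_def by auto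
    have NK: "N^2 \<ge> K2" using NK2 N1 by (metis le_trans power2_nat_le_imp_le le_refl power2_eq_square le_square)
    have Nm: "real N \<ge> m + 1" using XN by auto
    define R where "R = (real N / la) powr (1/(2*m))"
    define T where "T = ka * R"
    define eta where "eta = muu * R / (12 * real N ^ 2)"
    define e where "e = axis (undefined::'n) (1::complex)"
    define B where "B = ball (R *\<^sub>R e) eta"
    define U where "U = ball (T *\<^sub>R e) eta"
    define f where "f = fB (R *\<^sub>R e) eta b m"
    have NR: "real N > 0" using N1 by simp
    have R: "R > 0" unfolding R_def using NR la by simp
    have T: "T > 0" unfolding T_def using ka R by simp
    have N2: "real N ^ 2 \<ge> 1" using N1 by (simp add: one_le_power)
    have eta: "eta > 0" unfolding eta_def using muu R NR by simp
    have etaR: "eta / R \<le> 1 / (12 * real N ^ 2)" unfolding eta_def using muu R NR by (simp add: field_simps)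
    have etaT: "eta / T \<le> 1 / (12 * real N ^ 2)" unfolding eta_def T_def using muu R NR ka
      by (simp add: field_simps mult_right_mono)
    have etaR2: "eta \<le> R / 2"
    proof -
      have "eta \<le> R / (12 * real N ^ 2)" using etaR R by (simp add: field_simps)
      also have "\<dots> \<le> R / 2"
      proof (rule divide_left_mono)
        show "2 \<le> 12 * real N ^ 2" using N2 by linarith
      qed (use R NR in auto)
      finally show ?thesis .
    qed
    have Rp: "R powr (2*m) = real N / la" unfolding R_def using NR la m by (simp add: powr_powr)
    have Tp: "T powr (2*m) = q * real N / (2 * g * m)"
    proof -
      have "T powr (2*m) = ka powr (2*m) * R powr (2*m)" unfolding T_def using ka R by (simp add: powr_mult)
      also have "ka powr (2*m) = (b * q / (2 * g)) powr 2" unfolding ka_def using m b q g by (simp add: powr_powr)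
      also have "\<dots> = (b * q / (2 * g))^2" using b q g by (simp add: powr_realpow)
      finally show ?thesis unfolding Rp la_def using m b q g by (simp add: field_simps power2_eq_square)
    qed
    have cZ: "c * (T * R) = (real N / m) powr (1/m)"
    proof -
      have RR: "R * R = (real N / la) powr (1/m)" unfolding R_def using NR la m
        by (simp add: powr_add[symmetric])
      have "c * (T * R) = b powr (1/m) * (b * q / (2 * g)) powr (1/m) * (real N / la) powr (1/m)"
        unfolding c_def T_def ka_def RR[symmetric] by (simp add: mult_ac)
      also have "\<dots> = (b * (b * q / (2 * g)) * (real N / la)) powr (1/m)"
      proof -
        have "b * (b * q / (2 * g)) \<ge> 0" "real N / la \<ge> 0" "b \<ge> 0" "b * q / (2 * g) \<ge> 0"
          using b q g NR la by auto
        thus ?thesis by (simp only: powr_mult)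
      qed
      also have "b * (b * q / (2 * g)) * (real N / la) = real N / m"
        unfolding la_def using m b q g by (simp add: field_simps power2_eq_square)
      finally show ?thesis .
    qed
    have ne: "norm e = 1" unfolding e_def by (rule norm_axis)
    have f2: "inLp 2 b m f" unfolding f_def by (rule fB_inLp[OF m]) simp
    have fp: "inLp p a m f" unfolding f_def by (rule fB_inLp[OF m]) (use p in simp)
    from HC[OF f2 fp] have measP: "Proj b m f \<in> borel_measurable lborel"
      and Hineq: "(\<integral>\<^sup>+ z. ennreal (norm (Proj b m f z) powr q) \<partial>mu g m) \<le> ennreal ((C * Lpnorm p a m f) powr q)"
      by auto
    define AZ where "AZ = Acoef n m N * (c * (T * R)) ^ N"
    have AZF: "AZ \<ge> exp (F (real N))"
      unfolding AZ_def cZ F_def using AZ_lower[OF m n, of N] XN by simp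
    have AZ4: "AZ \<ge> 4"
    proof -
      have "4 = exp (ln (4::real))" by simp
      also have "\<dots> \<le> exp (F (real N))" using XN by (subst exp_le_cancel_iff) auto
      finally show ?thesis using AZF by simp
    qed
    define Kmin where "Kmin = C0 * (AZ / 2 - 1)"
    have Kmin: "Kmin > 0" unfolding Kmin_def using C0 AZ4 by simp
    have kernel_low: "Kmin \<le> Re (kernel b m x y)" if x: "x \<in> U" and y: "y \<in> B" for x y
    proof -
      have w: "norm (cinner x y - of_real (T * R)) \<le> (T * R) / (3 * real N ^ 2)"
      proof -
        have "norm (cinner x y - of_real (T * R)) \<le> eta * (R + eta) + T * eta"
          using cinner_dev[of x T "undefined::'n" eta y R] x y T R unfolding U_def B_def e_def by auto
        also have "\<dots> \<le> eta * (2 * R) + T * eta"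
          using etaR2 eta R T by (intro add_mono mult_left_mono) auto
        also have "\<dots> \<le> (T * R) / (4 * real N ^ 2)"
        proof -
          have "eta * (2 * R) = muu * R * R / (6 * real N ^ 2)" unfolding eta_def by (simp add: field_simps)
          also have "\<dots> \<le> ka * R * R / (6 * real N ^ 2)"
            using muu R NR by (intro divide_right_mono mult_right_mono) auto
          finally have 1: "eta * (2 * R) \<le> T * R / (6 * real N ^ 2)" unfolding T_def .
          have "T * eta = T * muu * R / (12 * real N ^ 2)" unfolding eta_def by (simp add: field_simps)
          also have "\<dots> \<le> T * 1 * R / (12 * real N ^ 2)"
            using muu R NR T by (intro divide_right_mono mult_right_mono mult_left_mono) auto
          finally have 2: "T * eta \<le> T * R / (12 * real N ^ 2)" by simp
          show ?thesis using 1 2 NR by (simp add: field_simps)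
        qed
        also have "\<dots> \<le> (T * R) / (3 * real N ^ 2)"
          using T R NR by (intro divide_left_mono) auto
        finally show ?thesis .
      qed
      have "AZ / 2 - 1 \<le> Re (Eser n m c (cinner x y))"
        unfolding AZ_def
        by (rule Eser_Re_lower[OF m n c N1 _ K2 NK cZ w]) (use T R in auto)
      hence "C0 * (AZ / 2 - 1) \<le> C0 * Re (Eser n m c (cinner x y))" using C0 by (intro mult_left_mono) auto
      thus ?thesis unfolding Kmin_def kernel_eq n_def[symmetric] c_def[symmetric] C0_def[symmetric]
        by (simp add: Re_complex_of_real)
    qed
    define measV where "measV = measure lborel B"
    have measV: "measV = V0 * eta ^ (n * 2)" and measU: "measure lborel U = measV"
      unfolding measV_def B_def U_def V0_def using less_imp_le[OF eta] by (simp_all add: content_ball n_def)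
    have measV0: "measV > 0" using measV V0 eta by simp
    define P0 where "P0 = Kmin * measV"
    have P0: "P0 > 0" unfolding P0_def using Kmin measV0 by simp
    have Plow: "P0 \<le> norm (Proj b m f x) \<and> norm x \<le> T + eta" if "x \<in> U" for x
    proof
      show "P0 \<le> norm (Proj b m f x)"
        unfolding P0_def measV_def f_def B_def
        by (rule Proj_fB_lower[OF m]) (use kernel_low that in \<open>auto simp: B_def\<close>)
      have "norm x \<le> norm (T *\<^sub>R e) + norm (x - T *\<^sub>R e)" using norm_triangle_ineq[of "T *\<^sub>R e" "x - T *\<^sub>R e"] by simp
      also have "\<dots> \<le> T + eta" using that T ne by (auto simp: U_def dist_norm norm_minus_commute)
      finally show "norm x \<le> T + eta" .
    qed
    have L1: "ennreal (measure lborel U * exp (- g * (T + eta) powr (2*m)) * P0 powr q)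
           \<le> (\<integral>\<^sup>+ x. ennreal (norm (Proj b m f x) powr q) \<partial>mu g m)"
      unfolding U_def by (rule LHS_lower[OF m _ _ measP]) (use g q P0 Plow in \<open>auto simp: U_def\<close>)
    define M where "M = (p * b - a) * (real N / la) + \<bar>p * b - a\<bar> * (4 * m / la)"
    have Mb: "(p * b - a) * norm y powr (2*m) \<le> M" if "y \<in> B" for y
    proof -
      have dy: "norm (y - R *\<^sub>R e) < eta" using that by (auto simp: B_def dist_norm norm_minus_commute)
      have nRe: "norm (R *\<^sub>R e) = R" using ne R by simp
      have ny: "R - eta \<le> norm y" "norm y \<le> R + eta"
      proof -
        have "norm (R *\<^sub>R e) - norm y \<le> norm (R *\<^sub>R e - y)" by (rule norm_triangle_ineq2)
        thus "R - eta \<le> norm y" using dy nRe by (simp add: norm_minus_commute)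
        have "norm y \<le> norm (R *\<^sub>R e) + norm (y - R *\<^sub>R e)"
          using norm_triangle_ineq[of "R *\<^sub>R e" "y - R *\<^sub>R e"] by simp
        thus "norm y \<le> R + eta" using dy nRe by simp
      qed
      have sm: "2 * m * eta / R \<le> 1/2"
      proof -
        have "2 * m * eta / R = 2 * m * (eta / R)" by simp
        also have "\<dots> \<le> 2 * m * (1 / (12 * real N ^ 2))" using etaR m by (intro mult_left_mono) auto
        also have "\<dots> \<le> 1/2"
        proof -
          have "real N ^ 2 \<ge> real N" using N1 by (simp add: power2_eq_square)
          hence "real N ^ 2 \<ge> m" using Nm by linarith
          thus ?thesis using m NR by (simp add: field_simps)
        qed
        finally show ?thesis .
      qed
      have err: "real N / la * (2 * (2 * m) * eta / R) \<le> 4 * m / la"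
      proof -
        have "real N / la * (2 * (2 * m) * eta / R) = 4 * m / la * (real N * (eta / R))" by (simp add: field_simps)
        also have "\<dots> \<le> 4 * m / la * (real N * (1 / (12 * real N ^ 2)))"
          using etaR m la NR by (intro mult_left_mono) auto
        also have "\<dots> \<le> 4 * m / la * 1"
          using m la NR N1 by (intro mult_left_mono) (auto simp: field_simps power2_eq_square)
        finally show ?thesis by simp
      qed
      have up: "norm y powr (2*m) \<le> real N / la + 4 * m / la"
      proof -
        have "norm y powr (2*m) \<le> (R + eta) powr (2*m)" using ny m by (intro powr_mono2) auto
        also have "\<dots> \<le> R powr (2*m) * (1 + 2 * (2*m) * eta / R)"
          using R m eta sm by (intro powr_pert_up) auto
        finally show ?thesis unfolding Rp using err by (simp add: algebra_simps)
      qed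
      have down: "real N / la - 4 * m / la \<le> norm y powr (2*m)"
      proof -
        have "R powr (2*m) * (1 - 2 * (2*m) * eta / R) \<le> (R - eta) powr (2*m)"
          using R m eta sm etaR2 by (intro powr_pert_down) auto
        also have "\<dots> \<le> norm y powr (2*m)" using ny m R etaR2 by (intro powr_mono2) auto
        finally show ?thesis unfolding Rp using err by (simp add: algebra_simps)
      qed
      have "\<bar>norm y powr (2*m) - real N / la\<bar> \<le> 4 * m / la" using up down by linarith
      hence "(p * b - a) * (norm y powr (2*m) - real N / la) \<le> \<bar>p * b - a\<bar> * (4 * m / la)"
      proof -
        assume h: "\<bar>norm y powr (2*m) - real N / la\<bar> \<le> 4 * m / la"
        have "(p * b - a) * (norm y powr (2*m) - real N / la) \<le> \<bar>(p * b - a) * (norm y powr (2*m) - real N / la)\<bar>"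
          by (rule abs_ge_self)
        also have "\<dots> = \<bar>p * b - a\<bar> * \<bar>norm y powr (2*m) - real N / la\<bar>" by (rule abs_mult)
        also have "\<dots> \<le> \<bar>p * b - a\<bar> * (4 * m / la)" using h by (intro mult_left_mono) auto
        finally show ?thesis .
      qed
      thus ?thesis unfolding M_def by (simp add: algebra_simps)
    qed
    have Lp: "Lpnorm p a m f \<le> (measV * exp M) powr (1/p)"
      unfolding f_def measV_def B_def by (rule fB_Lpnorm[OF m]) (use p Mb in \<open>auto simp: B_def\<close>)
    have Lp0: "Lpnorm p a m f \<ge> 0" unfolding Lpnorm_def by simp
    define L1 where "L1 = (measV * exp M) powr (1/p)"
    have L1pos: "L1 > 0" unfolding L1_def using measV0 by simp
    have "ennreal (measV * exp (- g * (T + eta) powr (2*m)) * P0 powr q) \<le> ennreal ((C * Lpnorm p a m f) powr q)"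
      using order.trans[OF L1 Hineq] unfolding measU .
    hence ineq0: "measV * exp (- g * (T + eta) powr (2*m)) * P0 powr q \<le> (C * Lpnorm p a m f) powr q"
      by (subst (asm) ennreal_le_iff) auto
    have "(C * Lpnorm p a m f) powr q = (\<bar>C\<bar> * Lpnorm p a m f) powr q"
      using Lp0 by (subst powr_abs_base) (simp add: abs_mult)
    also have "\<dots> \<le> (C1 * L1) powr q"
    proof (intro powr_mono2)
      show "\<bar>C\<bar> * Lpnorm p a m f \<le> C1 * L1"
        unfolding C1_def L1_def using Lp Lp0 by (intro mult_mono) auto
    qed (use q Lp0 in auto)
    finally have ineq: "measV * exp (- g * (T + eta) powr (2*m)) * P0 powr q \<le> (C1 * L1) powr q"
      using ineq0 by linarith
    define TP where "TP = (T + eta) powr (2*m)"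
    have TPb: "TP \<le> q * real N / (2 * g * m) + q / g"
    proof -
      have sm: "2 * m * eta / T \<le> 1/2"
      proof -
        have "2 * m * eta / T = 2 * m * (eta / T)" by simp
        also have "\<dots> \<le> 2 * m * (1 / (12 * real N ^ 2))" using etaT m by (intro mult_left_mono) auto
        also have "\<dots> \<le> 1/2"
        proof -
          have "real N ^ 2 \<ge> real N" using N1 by (simp add: power2_eq_square)
          hence "real N ^ 2 \<ge> m" using Nm by linarith
          thus ?thesis using m NR by (simp add: field_simps)
        qed
        finally show ?thesis .
      qed
      have "TP \<le> T powr (2*m) * (1 + 2 * (2*m) * eta / T)"
        unfolding TP_def using T m eta sm by (intro powr_pert_up) auto
      also have "\<dots> = q * real N / (2 * g * m) + q * real N / (2 * g * m) * (4 * m * (eta / T))"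
        unfolding Tp using m g T by (simp add: field_simps)
      also have "q * real N / (2 * g * m) * (4 * m * (eta / T)) \<le> q * real N / (2 * g * m) * (4 * m * (1 / (12 * real N ^ 2)))"
        using etaT q g m NR by (intro mult_left_mono) auto
      also have "q * real N / (2 * g * m) * (4 * m * (1 / (12 * real N ^ 2))) \<le> q / g"
        using q g m NR N1 by (simp add: field_simps power2_eq_square)
      finally show ?thesis by simp
    qed
    have lnP0: "ln P0 \<ge> ln C0 + F (real N) - ln 4 + ln measV"
    proof -
      have "AZ / 2 - 1 \<ge> AZ / 4" using AZ4 by simp
      hence "ln (AZ / 2 - 1) \<ge> ln (AZ / 4)" using AZ4 by (subst ln_le_cancel_iff) auto
      moreover have "ln (AZ / 4) = ln AZ - ln 4" using AZ4 by (simp add: ln_div)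
      moreover have "ln AZ \<ge> F (real N)" using AZF AZ4 by (metis ln_exp ln_le_cancel_iff exp_gt_zero order.strict_trans2)
      ultimately have "ln (AZ / 2 - 1) \<ge> F (real N) - ln 4" by linarith
      moreover have "ln P0 = ln C0 + ln (AZ / 2 - 1) + ln measV"
        unfolding P0_def Kmin_def using C0 AZ4 measV0 by (simp add: ln_mult)
      ultimately show ?thesis by linarith
    qed
    have lneta: "ln eta = ln muu + (1/(2*m)) * ln (real N/la) - ln 12 - 2 * ln (real N)"
      unfolding eta_def R_def using muu NR la by (simp add: ln_mult ln_div ln_powr ln_realpow)
    have lnV: "ln measV = lV (real N)"
      unfolding lV_def measV using V0 eta by (simp add: ln_mult ln_realpow lneta)
    have lnL: "ln (measV * exp (- g * TP) * P0 powr q) = ln measV - g * TP + q * ln P0"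
      using measV0 P0 by (simp add: ln_mult ln_powr)
    have lnR: "ln ((C1 * L1) powr q) = q * (ln C1 + (1/p) * (ln measV + M))"
      unfolding L1_def using C1 measV0 by (simp add: ln_mult ln_powr)
    have "ln (measV * exp (- g * TP) * P0 powr q) \<le> ln ((C1 * L1) powr q)"
      using ineq measV0 P0 C1 L1pos unfolding TP_def by (subst ln_le_cancel_iff) auto
    hence main: "ln measV - g * TP + q * ln P0 \<le> q * (ln C1 + (1/p) * (ln measV + M))"
      unfolding lnL lnR .
    have gTP: "g * TP \<le> q * real N / (2 * m) + q" using TPb g m by (simp add: field_simps)
    have qP: "q * ln P0 \<ge> q * (ln C0 + F (real N) - ln 4 + ln measV)" using lnP0 q by (intro mult_left_mono) auto
    have "sg * real N + Psi (real N) \<le> 0"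
    proof -
      have e1: "sg * real N + Psi (real N) =
         (ln measV - (q * real N / (2 * m) + q) + q * (ln C0 + F (real N) - ln 4 + ln measV))
         - q * (ln C1 + (1/p) * (ln measV + M))"
        unfolding sg_def Psi_def M_def K_def lnV[symmetric] using m p la by (simp add: field_simps)
      show ?thesis unfolding e1 using main gTP qP by linarith
    qed
    thus False using XN by linarith

  qed
  have bq: "b^2 * q > 0" using b q by simp
  have "1 \<le> 4 * g * (b - a / p) / (b^2 * q)" using key bq by (simp add: field_simps)
  moreover have "b - a / p > 0"
  proof -
    have "0 < q * b^2" using b q by simp
    also have "\<dots> \<le> 4 * g * (b - a / p)" by (rule key)
    finally show ?thesis using g by (simp add: zero_less_mult_iff)
  qed
  ultimately show ?thesis by (simp add: mult.commute)
qed


end
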